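(* Let $\mathscr T$ be a leafless, locally finite rooted directed tree, $q\geqslant1$, and let $\mathscr H_q$ be the Dirichlet space associated with $\mathscr T$. Then $\mathscr H_q$ has the complete Pick property, i.e. $\kappa_{\mathscr H_q}(z,w)$ is invertible for all $z,w\in\mathbb D$ and there is a positive definite function $F:\mathbb D\times\mathbb D\to B(E)$ with $I_E-\kappa_{\mathscr H_q}(z,w)^{-1}=F(z,w)$ for all $z,w\in\mathbb D$.
   Context: A directed tree $\mathscr T=(V,\mathcal E)$ is a directed graph with no circuits, connected, in which every non-root vertex has a unique parent; rooted means a unique vertex $\mathsf{root}$ has no parent. $\mathsf{Chi}(v)=\{u:(v,u)\in\mathcal E\}$; $\mathsf{Chi}^{\langle n\rangle}$ is the $n$-fold iterate. Locally finite: each $\mathsf{Chi}(v)$ finite; leafless: each $\mathsf{Chi}(v)$ nonempty; $V$ countably infinite. Depth $n_v$: the unique $n$ with $v\in\mathsf{Chi}^{\langle n\rangle}(\mathsf{root})$. Branching vertices $V_\prec=\{v:\mathrm{card}(\mathsf{Chi}(v))\geqslant2\}$. For $v\in V_\prec$, $\boldsymbol\lambda^v\in\ell^2(\mathsf{Chi}(v))$ is the constant function $\boldsymbol\lambda^v(u)=\frac{1}{\sqrt{\mathrm{card}(\mathsf{Chi}(v))}}\sqrt{\frac{n_v+q}{n_v+1}}$. Let $E=\langle e_{\mathsf{root}}\rangle\oplus\bigoplus_{v\in V_\prec}\big(\ell^2(\mathsf{Chi}(v))\ominus\langle\boldsymbol\lambda^v\rangle\big)\subseteq\ell^2(V)$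 and $I_E$ its identity. The Dirichlet space $\mathscr H_q$ is the reproducing kernel Hilbert space of $E$-valued holomorphic functions on $\mathbb D$ with kernel $\kappa_{\mathscr H_q}(z,w)=\sum_{n\ge0}\frac{(1)_n}{(q)_n}z^n\overline w^nP_{\langle e_{\mathsf{root}}\rangle}+\sum_{v\in V_\prec}\sum_{n\ge0}\frac{(n_v+2)_n}{(n_v+q+1)_n}z^n\overline w^nP_{\ell^2(\mathsf{Chi}(v))\ominus\langle\boldsymbol\lambda^v\rangle}$, with $P_{\mathcal M}$ the orthogonal projection of $E$ onto $\mathcal M$ and $(x)_n=\Gamma(x+n)/\Gamma(x)$. A function $F:\mathbb D\times\mathbb D\to B(E)$ is positive definite if $\sum_{i,j}\langle F(z_i,z_j)g_j,g_i\rangle\geqslant0$ for all finite families $z_i\in\mathbb D$, $g_i\in E$. *)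

theory Defs
  imports "HOL-Analysis.Analysis"
begin

definition Chi :: "('v \<times> 'v) set \<Rightarrow> 'v \<Rightarrow> 'v set" where
  "Chi Ed v = {u. (v, u) \<in> Ed}"

definition rooted_directed_tree :: "'v set \<Rightarrow> ('v \<times> 'v) set \<Rightarrow> 'v \<Rightarrow> bool" where
  "rooted_directed_tree V Ed r \<longleftrightarrow>
     Ed \<subseteq> V \<times> V \<and> r \<in> V \<and> acyclic Ed \<and>
     (\<forall>u\<in>V. \<forall>v\<in>V. (u, v) \<in> (Ed \<union> Ed\<inverse>)\<^sup>*) \<and>
     (\<forall>v\<in>V. v \<noteq> r \<longrightarrow> (\<exists>!u. (u, v) \<in> Ed)) \<and>
     (\<forall>u. (u, r) \<notin> Ed)"

definition locally_finite_tree :: "'v set \<Rightarrow> ('v \<times> 'v) set \<Rightarrow> bool" where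
  "locally_finite_tree V Ed \<longleftrightarrow> (\<forall>v\<in>V. finite (Chi Ed v))"

definition leafless_tree :: "'v set \<Rightarrow> ('v \<times> 'v) set \<Rightarrow> bool" where
  "leafless_tree V Ed \<longleftrightarrow> (\<forall>v\<in>V. Chi Ed v \<noteq> {})"

definition depth :: "('v \<times> 'v) set \<Rightarrow> 'v \<Rightarrow> 'v \<Rightarrow> nat" where
  "depth Ed r v = (THE n. (r, v) \<in> Ed ^^ n)"

definition branching :: "'v set \<Rightarrow> ('v \<times> 'v) set \<Rightarrow> 'v set" where
  "branching V Ed = {v \<in> V. card (Chi Ed v) \<ge> 2}"

definition lam :: "('v \<times> 'v) set \<Rightarrow> 'v \<Rightarrow> real \<Rightarrow> 'v \<Rightarrow> 'v \<Rightarrow> complex" where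
  "lam Ed r q v u = (if u \<in> Chi Ed v then
      complex_of_real (1 / sqrt (real (card (Chi Ed v)))
        * sqrt ((real (depth Ed r v) + q) / (real (depth Ed r v) + 1)))
     else 0)"

definition l2space :: "'v set \<Rightarrow> ('v \<Rightarrow> complex) set" where
  "l2space V = {g. (\<forall>u. u \<notin> V \<longrightarrow> g u = 0) \<and> (\<lambda>u. (cmod (g u))\<^sup>2) summable_on UNIV}"

definition l2_inner :: "('v \<Rightarrow> complex) \<Rightarrow> ('v \<Rightarrow> complex) \<Rightarrow> complex" where
  "l2_inner f g = (\<Sum>\<^sub>\<infinity>u. f u * cnj (g u))"

definition l2_norm :: "('v \<Rightarrow> complex) \<Rightarrow> real" where
  "l2_norm g = sqrt (\<Sum>\<^sub>\<infinity>u. (cmod (g u))\<^sup>2)"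

definition P_root :: "'v \<Rightarrow> ('v \<Rightarrow> complex) \<Rightarrow> ('v \<Rightarrow> complex)" where
  "P_root r g = (\<lambda>u. if u = r then g r else 0)"

definition P_block :: "('v \<times> 'v) set \<Rightarrow> 'v \<Rightarrow> real \<Rightarrow> 'v \<Rightarrow> ('v \<Rightarrow> complex) \<Rightarrow> ('v \<Rightarrow> complex)" where
  "P_block Ed r q v g = (\<lambda>u. if u \<in> Chi Ed v then
      g u - (l2_inner g (lam Ed r q v) / l2_inner (lam Ed r q v) (lam Ed r q v)) * lam Ed r q v u
     else 0)"

text \<open>The space E: the closed orthogonal direct sum of the blocks, i.e. those
  elements of l^2(V) that coincide with the sum of their projections onto the
  (mutually orthogonal) blocks.\<close>
definition Espace :: "'v set \<Rightarrow> ('v \<times> 'v) set \<Rightarrow> 'v \<Rightarrow> real \<Rightarrow> ('v \<Rightarrow> complex) set" where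
  "Espace V Ed r q = {g \<in> l2space V.
      \<forall>u. g u = P_root r g u + (\<Sum>\<^sub>\<infinity>v\<in>branching V Ed. P_block Ed r q v g u)}"

definition k_root :: "real \<Rightarrow> complex \<Rightarrow> complex" where
  "k_root q x = (\<Sum>n. complex_of_real (pochhammer 1 n / pochhammer q n) * x ^ n)"

definition k_vert :: "real \<Rightarrow> nat \<Rightarrow> complex \<Rightarrow> complex" where
  "k_vert q m x = (\<Sum>n. complex_of_real (pochhammer (real m + 2) n / pochhammer (real m + q + 1) n) * x ^ n)"

definition dirichlet_kernel ::
  "'v set \<Rightarrow> ('v \<times> 'v) set \<Rightarrow> 'v \<Rightarrow> real \<Rightarrow> complex \<Rightarrow> complex \<Rightarrow> ('v \<Rightarrow> complex) \<Rightarrow> ('v \<Rightarrow> complex)" where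
  "dirichlet_kernel V Ed r q z w g = (\<lambda>u.
      k_root q (z * cnj w) * P_root r g u
      + (\<Sum>\<^sub>\<infinity>v\<in>branching V Ed. k_vert q (depth Ed r v) (z * cnj w) * P_block Ed r q v g u))"

definition bounded_op_on :: "('v \<Rightarrow> complex) set \<Rightarrow> (('v \<Rightarrow> complex) \<Rightarrow> ('v \<Rightarrow> complex)) \<Rightarrow> bool" where
  "bounded_op_on E T \<longleftrightarrow>
     (\<forall>g\<in>E. T g \<in> E) \<and>
     (\<forall>a b g h. g \<in> E \<longrightarrow> h \<in> E \<longrightarrow> T (\<lambda>u. a * g u + b * h u) = (\<lambda>u. a * T g u + b * T h u)) \<and>
     (\<exists>C. \<forall>g\<in>E. l2_norm (T g) \<le> C * l2_norm g)"

definition invertible_op_on ::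
  "('v \<Rightarrow> complex) set \<Rightarrow> (('v \<Rightarrow> complex) \<Rightarrow> ('v \<Rightarrow> complex)) \<Rightarrow> (('v \<Rightarrow> complex) \<Rightarrow> ('v \<Rightarrow> complex)) \<Rightarrow> bool" where
  "invertible_op_on E T G \<longleftrightarrow> bounded_op_on E G \<and> (\<forall>g\<in>E. G (T g) = g \<and> T (G g) = g)"

definition positive_definite_on ::
  "('v \<Rightarrow> complex) set \<Rightarrow> (complex \<Rightarrow> complex \<Rightarrow> ('v \<Rightarrow> complex) \<Rightarrow> ('v \<Rightarrow> complex)) \<Rightarrow> bool" where
  "positive_definite_on E F \<longleftrightarrow>
     (\<forall>(m::nat) (z::nat \<Rightarrow> complex) (g::nat \<Rightarrow> 'v \<Rightarrow> complex).
        (\<forall>i<m. z i \<in> ball 0 1 \<and> g i \<in> E) \<longrightarrow>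
        (let s = (\<Sum>i<m. \<Sum>j<m. l2_inner (F (z i) (z j) (g j)) (g i)) in Im s = 0 \<and> Re s \<ge> 0))"

end

theory Submission
  imports Defs "HOL-Computational_Algebra.Formal_Power_Series"
begin


lemma kal_a_pos:
  fixes a rho :: "nat \<Rightarrow> real"
  assumes a0: "a 0 = 1" and aS: "\<And>n. a (Suc n) = a n * rho n"
    and rpos: "\<And>n. 0 < rho n" and rle1: "\<And>n. rho n \<le> 1"
  shows "0 < a n \<and> a n \<le> 1"
proof (induction n)
  case 0 then show ?case using a0 by simp
next
  case (Suc n)
  have "0 < a n * rho n" using Suc rpos by simp
  moreover have "a n * rho n \<le> 1 * 1" using Suc rpos rle1
    by (intro mult_mono) (auto simp: less_imp_le)
  ultimately show ?case using aS by simp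
qed

lemma kal_logconv:
  fixes a rho :: "nat \<Rightarrow> real"
  assumes a0: "a 0 = 1" and aS: "\<And>n. a (Suc n) = a n * rho n"
    and rpos: "\<And>n. 0 < rho n" and rle1: "\<And>n. rho n \<le> 1"
    and rmono: "\<And>n. rho n \<le> rho (Suc n)"
    and jm: "j \<le> m"
  shows "a (Suc j) * a m \<le> a (Suc m) * a j"
proof -
  have "rho j \<le> rho m" using jm rmono by (simp add: lift_Suc_mono_le)
  moreover have "0 \<le> a j * a m" using kal_a_pos[OF a0 aS rpos rle1] by (simp add: less_imp_le)
  ultimately have "a j * a m * rho j \<le> a j * a m * rho m" by (simp add: mult_left_mono)
  then show ?thesis using aS by (simp add: algebra_simps)
qed

lemma kal_conv:
  fixes a :: "nat \<Rightarrow> real"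
  assumes a0: "a 0 = 1"
  defines "b \<equiv> fps_nth (inverse (Abs_fps a))"
  shows "(\<Sum>i=0..n. b i * a (n - i)) = (if n = 0 then 1 else 0)"
    and "(\<Sum>i=0..n. a i * b (n - i)) = (if n = 0 then 1 else 0)"
proof -
  have "inverse (Abs_fps a) * Abs_fps a = 1" using a0 by (intro inverse_mult_eq_1) simp
  then have "fps_nth (inverse (Abs_fps a) * Abs_fps a) n = fps_nth (1::real fps) n" by simp
  then show "(\<Sum>i=0..n. b i * a (n - i)) = (if n = 0 then 1 else 0)"
    unfolding fps_mult_nth b_def by simp
  have "Abs_fps a * inverse (Abs_fps a) = 1" using a0 by (intro inverse_mult_eq_1') simp
  then have "fps_nth (Abs_fps a * inverse (Abs_fps a)) n = fps_nth (1::real fps) n" by simp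
  then show "(\<Sum>i=0..n. a i * b (n - i)) = (if n = 0 then 1 else 0)"
    unfolding fps_mult_nth b_def by simp
qed

lemma kal_b0:
  fixes a :: "nat \<Rightarrow> real"
  assumes a0: "a 0 = 1"
  shows "fps_nth (inverse (Abs_fps a)) 0 = 1"
  using kal_conv(1)[where a=a, OF a0, of 0] a0 by simp

lemma kal_main:
  fixes a rho :: "nat \<Rightarrow> real"
  assumes a0: "a 0 = 1" and aS: "\<And>n. a (Suc n) = a n * rho n"
    and rpos: "\<And>n. 0 < rho n" and rle1: "\<And>n. rho n \<le> 1"
    and rmono: "\<And>n. rho n \<le> rho (Suc n)"
  defines "b \<equiv> fps_nth (inverse (Abs_fps a))"
  shows "n \<ge> 1 \<Longrightarrow> b n \<le> 0"
proof (induction n rule: less_induct)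
  case (less n)
  note apos = kal_a_pos[OF a0 aS rpos rle1]
  have b0: "b 0 = 1" unfolding b_def by (rule kal_b0[where a=a, OF a0])
  obtain m where n: "n = Suc m" using less.prems by (cases n) auto
  have conv: "\<And>k. (\<Sum>i=0..k. b i * a (k - i)) = (if k = 0 then 1 else 0)"
    unfolding b_def by (rule kal_conv(1)[where a=a, OF a0])
  have split: "(\<Sum>i=0..Suc m. b i * a (Suc m - i)) = b (Suc m) + (\<Sum>i=0..m. b i * a (Suc m - i))"
    using a0 by (simp add: sum.atLeast0_atMost_Suc)
  have S: "0 \<le> (\<Sum>i=0..m. b i * a (Suc m - i))"
  proof (cases "m = 0")
    case True then show ?thesis using b0 apos[of 1] by simp
  next
    case False
    have "a (Suc m) * (\<Sum>i=0..m. b i * a (m - i)) \<le> a m * (\<Sum>i=0..m. b i * a (Suc m - i))"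
      unfolding sum_distrib_left
    proof (rule sum_mono)
      fix i assume i: "i \<in> {0..m}"
      show "a (Suc m) * (b i * a (m - i)) \<le> a m * (b i * a (Suc m - i))"
      proof (cases "i = 0")
        case True then show ?thesis using b0 by simp
      next
        case False
        have bi: "b i \<le> 0" using less.IH[of i] False i n by auto
        have "a (Suc (m - i)) * a m \<le> a (Suc m) * a (m - i)"
          by (rule kal_logconv[OF a0 aS rpos rle1 rmono]) simp
        moreover have "Suc m - i = Suc (m - i)" using i by auto
        ultimately have "a m * a (Suc m - i) \<le> a (Suc m) * a (m - i)" by (simp add: mult.commute)
        then have "b i * (a (Suc m) * a (m - i)) \<le> b i * (a m * a (Suc m - i))"
          using bi by (rule mult_left_mono_neg)
        then show ?thesis by (simp add: algebra_simps)
      qed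
    qed
    then have "0 \<le> a m * (\<Sum>i=0..m. b i * a (Suc m - i))" using conv[of m] False by simp
    then show ?thesis using apos[of m] by (simp add: zero_le_mult_iff)
  qed
  show ?case using conv[of "Suc m"] split S n by simp
qed

lemma kal_lower:
  fixes a rho :: "nat \<Rightarrow> real"
  assumes a0: "a 0 = 1" and aS: "\<And>n. a (Suc n) = a n * rho n"
    and rpos: "\<And>n. 0 < rho n" and rle1: "\<And>n. rho n \<le> 1"
    and rmono: "\<And>n. rho n \<le> rho (Suc n)"
  defines "b \<equiv> fps_nth (inverse (Abs_fps a))"
  shows "-1 \<le> b n"
proof (cases n)
  case 0 then show ?thesis using kal_b0[where a=a, OF a0] b_def by simp
next
  case (Suc m)
  note apos = kal_a_pos[OF a0 aS rpos rle1]
  have conv: "(\<Sum>i=0..n. b i * a (n - i)) = 0"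
    unfolding b_def using kal_conv(1)[where a=a, OF a0, of n] Suc by simp
  have "(\<Sum>i=0..n. b i * a (n - i)) = (\<Sum>i\<in>insert 0 (insert n {1..<n}). b i * a (n - i))"
    using Suc by (intro sum.cong) auto
  also have "\<dots> = b 0 * a n + b n * a 0 + (\<Sum>i=1..<n. b i * a (n - i))"
    using Suc by (simp add: add.assoc)
  finally have eq: "a n + b n + (\<Sum>i=1..<n. b i * a (n - i)) = 0"
    using conv a0 kal_b0[where a=a, OF a0] b_def by simp
  have "(\<Sum>i=1..<n. b i * a (n - i)) \<le> 0"
  proof (rule sum_nonpos)
    fix i assume "i \<in> {1..<n}"
    then have "b i \<le> 0" unfolding b_def by (intro kal_main[OF a0 aS rpos rle1 rmono]) auto
    moreover have "0 \<le> a (n - i)" using apos by (simp add: less_imp_le)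
    ultimately show "b i * a (n - i) \<le> 0" by (simp add: mult_nonpos_nonneg)
  qed
  then show ?thesis using eq apos[of n] by linarith
qed



lemma geom_bound:
  fixes e :: "nat \<Rightarrow> real" and x :: complex
  assumes e: "\<And>n. \<bar>e n\<bar> \<le> 1" and x: "cmod x < 1"
  shows "summable (\<lambda>n. norm (complex_of_real (e n) * x ^ n))"
    and "cmod (\<Sum>n. complex_of_real (e n) * x ^ n) \<le> 1 / (1 - cmod x)"
proof -
  have le: "norm (complex_of_real (e n) * x ^ n) \<le> cmod x ^ n" for n
    using e[of n] by (simp add: norm_mult norm_power mult_left_le_one_le)
  have g: "summable (\<lambda>n. cmod x ^ n)" using x by (simp add: summable_geometric)
  show s: "summable (\<lambda>n. norm (complex_of_real (e n) * x ^ n))"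
    by (rule summable_comparison_test[OF _ g]) (use le in auto)
  have "cmod (\<Sum>n. complex_of_real (e n) * x ^ n) \<le> (\<Sum>n. norm (complex_of_real (e n) * x ^ n))"
    by (rule summable_norm[OF s])
  also have "\<dots> \<le> (\<Sum>n. cmod x ^ n)" by (rule suminf_le[OF le s g])
  also have "\<dots> = 1 / (1 - cmod x)" using x by (simp add: suminf_geometric)
  finally show "cmod (\<Sum>n. complex_of_real (e n) * x ^ n) \<le> 1 / (1 - cmod x)" .
qed

lemma kal_pkg:
  fixes s t :: real
  assumes s: "0 < s" and st: "s \<le> t"
  shows "\<exists>c::nat \<Rightarrow> real. (\<forall>n. 0 \<le> c n \<and> c n \<le> 1) \<and>
     (\<forall>x::complex. cmod x < 1 \<longrightarrow>
        (\<Sum>n. complex_of_real (pochhammer s n / pochhammer t n) * x ^ n) *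
          (1 - (\<Sum>n. complex_of_real (c n) * x ^ n)) = 1)"
proof -
  define a where "a n = pochhammer s n / pochhammer t n" for n
  define rho where "rho n = (s + real n) / (t + real n)" for n
  have tpos: "0 < t" using s st by simp
  have a0: "a 0 = 1" by (simp add: a_def)
  have aS: "a (Suc n) = a n * rho n" for n
    using pochhammer_pos[OF tpos, of n] tpos
    by (simp add: a_def rho_def pochhammer_Suc field_simps)
  have rpos: "0 < rho n" for n using s tpos by (simp add: rho_def)
  have rle1: "rho n \<le> 1" for n using st tpos by (simp add: rho_def)
  have rmono: "rho n \<le> rho (Suc n)" for n
    using s st tpos by (simp add: rho_def field_simps)
  define b where "b = fps_nth (inverse (Abs_fps a))"
  define c where "c n = (if n = 0 then 0 else - b n)" for n
  note apos = kal_a_pos[OF a0 aS rpos rle1]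
  have b0: "b 0 = 1" unfolding b_def by (rule kal_b0[where a=a, OF a0])
  have bneg: "n \<ge> 1 \<Longrightarrow> b n \<le> 0" for n unfolding b_def by (rule kal_main[OF a0 aS rpos rle1 rmono])
  have blow: "-1 \<le> b n" for n unfolding b_def by (rule kal_lower[OF a0 aS rpos rle1 rmono])
  have conv: "(\<Sum>i=0..n. a i * b (n - i)) = (if n = 0 then 1 else 0)" for n
    unfolding b_def by (rule kal_conv(2)[where a=a, OF a0])
  have cb: "0 \<le> c n \<and> c n \<le> 1" for n using bneg[of n] blow[of n] by (auto simp: c_def)
  have babs: "\<bar>b n\<bar> \<le> 1" for n using bneg[of n] blow[of n] b0 by (cases "n = 0") auto
  have aabs: "\<bar>a n\<bar> \<le> 1" for n using apos[of n] by auto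
  have cabs: "\<bar>c n\<bar> \<le> 1" for n using cb[of n] by auto
  show ?thesis
  proof (intro exI conjI allI impI)
    fix n show "0 \<le> c n" "c n \<le> 1" using cb by auto
  next
    fix x :: complex assume x: "cmod x < 1"
    have sa: "summable (\<lambda>n. norm (complex_of_real (a n) * x ^ n))" by (rule geom_bound(1)[OF aabs x])
    have sb: "summable (\<lambda>n. norm (complex_of_real (b n) * x ^ n))" by (rule geom_bound(1)[OF babs x])
    have sc: "summable (\<lambda>n. norm (complex_of_real (c n) * x ^ n))" by (rule geom_bound(1)[OF cabs x])
    have "(\<Sum>n. complex_of_real (b n) * x ^ n) =
          (\<Sum>n. (if n = 0 then 1 else 0) - complex_of_real (c n) * x ^ n)"
      by (intro suminf_cong) (auto simp: c_def b0)
    also have "\<dots> = (\<Sum>n. (if n = 0 then 1 else 0)) - (\<Sum>n. complex_of_real (c n) * x ^ n)"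
    proof -
      have f1: "summable (\<lambda>n. if n = 0 then 1 else (0::complex))"
        using sums_single[of 0 "\<lambda>_. 1::complex"] by (simp add: sums_iff)
      show ?thesis by (rule suminf_diff[symmetric, OF f1 summable_norm_cancel[OF sc]])
    qed
    also have "(\<Sum>n. (if n = 0 then 1 else 0 :: complex)) = 1"
      using sums_single[of 0 "\<lambda>_. 1::complex"] by (simp add: sums_iff)
    finally have D: "(\<Sum>n. complex_of_real (b n) * x ^ n) = 1 - (\<Sum>n. complex_of_real (c n) * x ^ n)" .
    have "(\<Sum>n. complex_of_real (a n) * x ^ n) * (\<Sum>n. complex_of_real (b n) * x ^ n)
        = (\<Sum>k. \<Sum>i\<le>k. complex_of_real (a i) * x ^ i * (complex_of_real (b (k - i)) * x ^ (k - i)))"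
      by (rule Cauchy_product[OF sa sb])
    also have "\<dots> = (\<Sum>k. complex_of_real (\<Sum>i=0..k. a i * b (k - i)) * x ^ k)"
    proof (intro suminf_cong)
      fix k
      have "(\<Sum>i\<le>k. complex_of_real (a i) * x ^ i * (complex_of_real (b (k - i)) * x ^ (k - i)))
          = (\<Sum>i\<le>k. complex_of_real (a i * b (k - i)) * x ^ k)"
      proof (intro sum.cong refl)
        fix i assume "i \<in> {..k}"
        then have "x ^ i * x ^ (k - i) = x ^ k" by (simp add: power_add[symmetric])
        then show "complex_of_real (a i) * x ^ i * (complex_of_real (b (k - i)) * x ^ (k - i))
          = complex_of_real (a i * b (k - i)) * x ^ k"
          by (simp add: algebra_simps)
      qed
      also have "\<dots> = complex_of_real (\<Sum>i=0..k. a i * b (k - i)) * x ^ k"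
        by (simp add: sum_distrib_right atMost_atLeast0)
      finally show "(\<Sum>i\<le>k. complex_of_real (a i) * x ^ i * (complex_of_real (b (k - i)) * x ^ (k - i)))
          = complex_of_real (\<Sum>i=0..k. a i * b (k - i)) * x ^ k" .
    qed
    also have "\<dots> = (\<Sum>k. (if k = 0 then 1 else 0))"
      by (intro suminf_cong) (simp add: conv)
    also have "\<dots> = (1::complex)"
      using sums_single[of 0 "\<lambda>_. 1::complex"] by (simp add: sums_iff)
    finally show "(\<Sum>n. complex_of_real (pochhammer s n / pochhammer t n) * x ^ n) *
          (1 - (\<Sum>n. complex_of_real (c n) * x ^ n)) = 1"
      using D by (simp add: a_def)
  qed
qed



definition Cf :: "(nat \<Rightarrow> real) \<Rightarrow> complex \<Rightarrow> complex" where
  "Cf c x = (\<Sum>n. complex_of_real (c n) * x ^ n)"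

lemma pos_pt:
  fixes c :: "nat \<Rightarrow> real" and z G :: "nat \<Rightarrow> complex"
  assumes c: "\<And>n. 0 \<le> c n \<and> c n \<le> 1" and z: "\<And>i. i < m \<Longrightarrow> cmod (z i) < 1"
  shows "\<exists>R\<ge>0. (\<Sum>i<m. \<Sum>j<m. Cf c (z i * cnj (z j)) * G j * cnj (G i)) = complex_of_real R"
proof -
  have cabs: "\<bar>c n\<bar> \<le> 1" for n using c[of n] by auto
  define f where "f i j n = complex_of_real (c n) * (z i * cnj (z j)) ^ n * G j * cnj (G i)" for i j n
  have xlt: "cmod (z i * cnj (z j)) < 1" if "i < m" "j < m" for i j
  proof -
    have "cmod (z i * cnj (z j)) = cmod (z i) * cmod (z j)" by (simp add: norm_mult)
    also have "\<dots> \<le> cmod (z i) * 1" using z[OF that(2)]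
      by (intro mult_left_mono) auto
    also have "\<dots> < 1" using z[OF that(1)] by simp
    finally show ?thesis .
  qed
  have sf: "summable (f i j)" if "i < m" "j < m" for i j
  proof -
    have "summable (\<lambda>n. complex_of_real (c n) * (z i * cnj (z j)) ^ n)"
      by (rule summable_norm_cancel[OF geom_bound(1)[OF cabs xlt[OF that]]])
    then show ?thesis unfolding f_def mult.assoc[symmetric] by (intro summable_mult2)
  qed
  have "(\<Sum>i<m. \<Sum>j<m. Cf c (z i * cnj (z j)) * G j * cnj (G i)) = (\<Sum>i<m. \<Sum>j<m. suminf (f i j))"
  proof (intro sum.cong refl)
    fix i j assume i: "i \<in> {..<m}" and j: "j \<in> {..<m}"
    have s1: "summable (\<lambda>n. complex_of_real (c n) * (z i * cnj (z j)) ^ n)"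
      using i j by (intro summable_norm_cancel[OF geom_bound(1)[OF cabs xlt]]) auto
    show "Cf c (z i * cnj (z j)) * G j * cnj (G i) = suminf (f i j)"
      unfolding Cf_def f_def using suminf_mult2[OF s1, of "G j * cnj (G i)"]
      by (simp add: mult.assoc)
  qed
  also have "\<dots> = (\<Sum>i<m. \<Sum>n. \<Sum>j<m. f i j n)"
    by (intro sum.cong refl suminf_sum[symmetric]) (auto intro: sf)
  also have "\<dots> = (\<Sum>n. \<Sum>i<m. \<Sum>j<m. f i j n)"
    by (intro suminf_sum[symmetric] summable_sum) (auto intro: sf)
  finally have eq1: "(\<Sum>i<m. \<Sum>j<m. Cf c (z i * cnj (z j)) * G j * cnj (G i)) = (\<Sum>n. \<Sum>i<m. \<Sum>j<m. f i j n)" .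
  have summ: "summable (\<lambda>n. \<Sum>i<m. \<Sum>j<m. f i j n)"
    by (intro summable_sum) (auto intro: sf)
  define A where "A n = (\<Sum>j<m. cnj (z j) ^ n * G j)" for n
  have pt: "(\<Sum>i<m. \<Sum>j<m. f i j n) = complex_of_real (c n * (cmod (A n))\<^sup>2)" for n
  proof -
    have cA: "cnj (A n) = (\<Sum>i<m. z i ^ n * cnj (G i))" by (simp add: A_def)
    have "complex_of_real (c n) * ((\<Sum>i<m. z i ^ n * cnj (G i)) * A n)
       = (\<Sum>i<m. \<Sum>j<m. complex_of_real (c n) * ((z i ^ n * cnj (G i)) * (cnj (z j) ^ n * G j)))"
      unfolding A_def sum_product by (simp add: sum_distrib_left)
    also have "\<dots> = (\<Sum>i<m. \<Sum>j<m. f i j n)"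
      unfolding f_def by (intro sum.cong refl) (simp add: power_mult_distrib algebra_simps)
    finally have "(\<Sum>i<m. \<Sum>j<m. f i j n) = complex_of_real (c n) * ((\<Sum>i<m. z i ^ n * cnj (G i)) * A n)" by simp
    also have "\<dots> = complex_of_real (c n) * (A n * cnj (A n))" using cA by simp
    also have "\<dots> = complex_of_real (c n * (cmod (A n))\<^sup>2)" by (simp only: of_real_mult complex_norm_square)
    finally show ?thesis .
  qed
  have summr: "summable (\<lambda>n. c n * (cmod (A n))\<^sup>2)"
    using summ unfolding pt summable_complex_of_real .
  have "(\<Sum>n. \<Sum>i<m. \<Sum>j<m. f i j n) = complex_of_real (\<Sum>n. c n * (cmod (A n))\<^sup>2)"
    unfolding pt by (rule suminf_of_real[OF summr, symmetric])
  moreover have "0 \<le> (\<Sum>n. c n * (cmod (A n))\<^sup>2)"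
    by (intro suminf_nonneg summr) (simp add: c)
  ultimately show ?thesis using eq1 by auto
qed



lemma l2_summ: "g \<in> l2space V \<Longrightarrow> (\<lambda>u. (cmod (g u))\<^sup>2) summable_on UNIV"
  by (simp add: l2space_def)

lemma l2_mult:
  assumes g: "g \<in> l2space V" and m: "\<And>u. cmod (m u) \<le> C"
  shows "(\<lambda>u. m u * g u) \<in> l2space V"
proof -
  have s: "(\<lambda>u. C\<^sup>2 * (cmod (g u))\<^sup>2) summable_on UNIV"
    by (rule summable_on_cmult_right[OF l2_summ[OF g]])
  have le: "(cmod (m u * g u))\<^sup>2 \<le> C\<^sup>2 * (cmod (g u))\<^sup>2" for u
  proof -
    have "(cmod (m u))\<^sup>2 \<le> C\<^sup>2" using m[of u] by (intro power_mono) auto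
    then show ?thesis by (simp add: norm_mult power_mult_distrib mult_right_mono)
  qed
  have "(\<lambda>u. (cmod (m u * g u))\<^sup>2) summable_on UNIV"
    by (rule summable_on_comparison_test[OF s]) (use le in auto)
  moreover have "\<forall>u. u \<notin> V \<longrightarrow> m u * g u = 0" using g by (simp add: l2space_def)
  ultimately show ?thesis by (simp add: l2space_def)
qed

lemma l2_lin:
  assumes g: "g \<in> l2space V" and h: "h \<in> l2space V"
  shows "(\<lambda>u. a * g u + b * h u) \<in> l2space V"
proof -
  have s: "(\<lambda>u. 2 * (cmod a)\<^sup>2 * (cmod (g u))\<^sup>2 + 2 * (cmod b)\<^sup>2 * (cmod (h u))\<^sup>2) summable_on UNIV"
    by (intro summable_on_add summable_on_cmult_right l2_summ[OF g] l2_summ[OF h])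
  have le: "(cmod (a * g u + b * h u))\<^sup>2 \<le> 2 * (cmod a)\<^sup>2 * (cmod (g u))\<^sup>2 + 2 * (cmod b)\<^sup>2 * (cmod (h u))\<^sup>2" for u
  proof -
    define x where "x = cmod a * cmod (g u)"
    define y where "y = cmod b * cmod (h u)"
    have "cmod (a * g u + b * h u) \<le> x + y"
      unfolding x_def y_def by (metis norm_mult norm_triangle_ineq)
    then have "(cmod (a * g u + b * h u))\<^sup>2 \<le> (x + y)\<^sup>2" by (intro power_mono) auto
    also have "\<dots> \<le> 2 * x\<^sup>2 + 2 * y\<^sup>2"
    proof -
      have "0 \<le> (x - y)\<^sup>2" by simp
      then show ?thesis by (simp add: power2_sum power2_diff)
    qed
    finally show ?thesis by (simp add: x_def y_def power_mult_distrib)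
  qed
  have "(\<lambda>u. (cmod (a * g u + b * h u))\<^sup>2) summable_on UNIV"
    by (rule summable_on_comparison_test[OF s]) (use le in auto)
  moreover have "\<forall>u. u \<notin> V \<longrightarrow> a * g u + b * h u = 0" using g h by (simp add: l2space_def)
  ultimately show ?thesis by (simp add: l2space_def)
qed

lemma l2_prod:
  assumes g: "g \<in> l2space V" and h: "h \<in> l2space V"
  shows "(\<lambda>u. g u * cnj (h u)) summable_on UNIV"
proof -
  have s: "(\<lambda>u. (cmod (g u))\<^sup>2 + (cmod (h u))\<^sup>2) summable_on UNIV"
    by (intro summable_on_add l2_summ[OF g] l2_summ[OF h])
  have le: "norm (g u * cnj (h u)) \<le> (cmod (g u))\<^sup>2 + (cmod (h u))\<^sup>2" for u
  proof -
    have "0 \<le> (cmod (g u) - cmod (h u))\<^sup>2" by simp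
    then have "2 * (cmod (g u) * cmod (h u)) \<le> (cmod (g u))\<^sup>2 + (cmod (h u))\<^sup>2"
      by (simp add: power2_diff)
    moreover have "0 \<le> cmod (g u) * cmod (h u)" by simp
    ultimately have "cmod (g u) * cmod (h u) \<le> (cmod (g u))\<^sup>2 + (cmod (h u))\<^sup>2" by linarith
    then show ?thesis by (simp add: norm_mult)
  qed
  have "(\<lambda>u. norm (g u * cnj (h u))) summable_on UNIV"
    by (rule summable_on_comparison_test[OF s]) (use le in auto)
  then show ?thesis by (simp add: summable_on_iff_abs_summable_on_complex)
qed

lemma l2_norm_mult:
  assumes g: "g \<in> l2space V" and m: "\<And>u. cmod (m u) \<le> C"
  shows "l2_norm (\<lambda>u. m u * g u) \<le> C * l2_norm g"
proof -
  have C0: "0 \<le> C" using m[of undefined] norm_ge_zero order_trans by blast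
  have le: "(cmod (m u * g u))\<^sup>2 \<le> C\<^sup>2 * (cmod (g u))\<^sup>2" for u
  proof -
    have "(cmod (m u))\<^sup>2 \<le> C\<^sup>2" using m[of u] by (intro power_mono) auto
    then show ?thesis by (simp add: norm_mult power_mult_distrib mult_right_mono)
  qed
  have s1: "(\<lambda>u. (cmod (m u * g u))\<^sup>2) summable_on UNIV"
    using l2_summ[OF l2_mult[OF g m]] .
  have "(\<Sum>\<^sub>\<infinity>u. (cmod (m u * g u))\<^sup>2) \<le> (\<Sum>\<^sub>\<infinity>u. C\<^sup>2 * (cmod (g u))\<^sup>2)"
    by (rule infsum_mono[OF s1 summable_on_cmult_right[OF l2_summ[OF g]]]) (use le in auto)
  also have "\<dots> = C\<^sup>2 * (\<Sum>\<^sub>\<infinity>u. (cmod (g u))\<^sup>2)" by (rule infsum_cmult_right')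
  finally have "sqrt (\<Sum>\<^sub>\<infinity>u. (cmod (m u * g u))\<^sup>2) \<le> sqrt (C\<^sup>2 * (\<Sum>\<^sub>\<infinity>u. (cmod (g u))\<^sup>2))"
    by (rule real_sqrt_le_mono)
  also have "\<dots> = C * sqrt (\<Sum>\<^sub>\<infinity>u. (cmod (g u))\<^sup>2)" using C0 by (simp add: real_sqrt_mult)
  finally show ?thesis by (simp add: l2_norm_def)
qed

lemma l2_inner_fin:
  assumes "finite S" and "\<And>u. u \<notin> S \<Longrightarrow> k u = 0"
  shows "l2_inner f k = (\<Sum>u\<in>S. f u * cnj (k u))"
proof -
  have "l2_inner f k = infsum (\<lambda>u. f u * cnj (k u)) S"
    unfolding l2_inner_def by (rule infsum_cong_neutral) (use assms in auto)
  then show ?thesis using assms by simp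
qed



locale TC =
  fixes V :: "'v set" and Ed :: "('v \<times> 'v) set" and r :: 'v and q :: real
  assumes sub: "Ed \<subseteq> V \<times> V" and noparent: "\<And>u. (u, r) \<notin> Ed"
    and uniq: "\<And>v. v \<in> V \<Longrightarrow> v \<noteq> r \<Longrightarrow> \<exists>!u. (u, v) \<in> Ed"
begin

definition Opx :: "complex \<Rightarrow> (nat \<Rightarrow> complex) \<Rightarrow> ('v \<Rightarrow> complex) \<Rightarrow> ('v \<Rightarrow> complex)" where
  "Opx \<alpha> \<beta> g = (\<lambda>u. \<alpha> * P_root r g u + (\<Sum>\<^sub>\<infinity>v\<in>branching V Ed. \<beta> (depth Ed r v) * P_block Ed r q v g u))"

definition bc :: "'v \<Rightarrow> bool" where
  "bc u \<longleftrightarrow> (\<exists>v\<in>branching V Ed. u \<in> Chi Ed v)"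

definition par :: "'v \<Rightarrow> 'v" where
  "par u = (SOME v. v \<in> branching V Ed \<and> u \<in> Chi Ed v)"

definition mu :: "complex \<Rightarrow> (nat \<Rightarrow> complex) \<Rightarrow> 'v \<Rightarrow> complex" where
  "mu \<alpha> \<beta> u = (if u = r then \<alpha> else if bc u then \<beta> (depth Ed r (par u)) else 0)"

lemma chi_uniq: "u \<in> Chi Ed v \<Longrightarrow> u \<in> Chi Ed v' \<Longrightarrow> v = v'"
proof -
  assume a: "u \<in> Chi Ed v" "u \<in> Chi Ed v'"
  then have e: "(v, u) \<in> Ed" "(v', u) \<in> Ed" by (auto simp: Chi_def)
  then have "u \<in> V" using sub by auto
  moreover have "u \<noteq> r" using e noparent by auto
  ultimately show "v = v'" using uniq e by blast
qed

lemma r_notchi: "r \<notin> Chi Ed v"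
  using noparent by (auto simp: Chi_def)

lemma par_eq: "v \<in> branching V Ed \<Longrightarrow> u \<in> Chi Ed v \<Longrightarrow> par u = v"
  unfolding par_def by (rule some_equality) (auto dest: chi_uniq)

lemma par_in: "bc u \<Longrightarrow> par u \<in> branching V Ed \<and> u \<in> Chi Ed (par u)"
  unfolding bc_def using par_eq by auto

lemma bc_r: "\<not> bc r"
  using r_notchi by (auto simp: bc_def)

lemma P_block_out: "u \<notin> Chi Ed v \<Longrightarrow> P_block Ed r q v g u = 0"
  by (simp add: P_block_def)

lemma bsum: "(\<Sum>\<^sub>\<infinity>v\<in>branching V Ed. h v * P_block Ed r q v g u) =
   (if bc u then h (par u) * P_block Ed r q (par u) g u else 0)"
proof (cases "bc u")
  case True
  note pi = par_in[OF True]
  have "(\<Sum>\<^sub>\<infinity>v\<in>branching V Ed. h v * P_block Ed r q v g u) =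
        (\<Sum>\<^sub>\<infinity>v\<in>{par u}. h v * P_block Ed r q v g u)"
  proof (rule infsum_cong_neutral)
    fix v assume "v \<in> branching V Ed - {par u}"
    then have "u \<notin> Chi Ed v" using par_eq by auto
    then show "h v * P_block Ed r q v g u = 0" by (simp add: P_block_out)
  qed (use pi in auto)
  then show ?thesis using True by simp
next
  case False
  then have "\<And>v. v \<in> branching V Ed \<Longrightarrow> u \<notin> Chi Ed v" by (auto simp: bc_def)
  then show ?thesis using False by (auto intro!: infsum_0 simp: P_block_out)
qed

lemma E_char: "g \<in> Espace V Ed r q \<longleftrightarrow> g \<in> l2space V \<and>
   (\<forall>u. g u = P_root r g u + (if bc u then P_block Ed r q (par u) g u else 0))"
  using bsum[where h="\<lambda>_. 1" and g=g] by (simp add: Espace_def)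

lemma E_l2: "g \<in> Espace V Ed r q \<Longrightarrow> g \<in> l2space V"
  by (simp add: E_char)

lemma E_bc: "g \<in> Espace V Ed r q \<Longrightarrow> bc u \<Longrightarrow> P_block Ed r q (par u) g u = g u"
proof -
  assume g: "g \<in> Espace V Ed r q" and b: "bc u"
  then have "u \<noteq> r" using bc_r by auto
  then show ?thesis using g b unfolding E_char by (metis P_root_def add_0)
qed

lemma E_nbc: "g \<in> Espace V Ed r q \<Longrightarrow> u \<noteq> r \<Longrightarrow> \<not> bc u \<Longrightarrow> g u = 0"
  unfolding E_char by (metis P_root_def add_0)

lemma Op_pt: "g \<in> Espace V Ed r q \<Longrightarrow> Opx \<alpha> \<beta> g u = mu \<alpha> \<beta> u * g u"
proof -
  assume g: "g \<in> Espace V Ed r q"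
  have "Opx \<alpha> \<beta> g u = \<alpha> * P_root r g u + (if bc u then \<beta> (depth Ed r (par u)) * P_block Ed r q (par u) g u else 0)"
    unfolding Opx_def bsum by simp
  then show ?thesis using E_bc[OF g] E_nbc[OF g] bc_r
    by (cases "u = r"; cases "bc u") (auto simp: mu_def P_root_def)
qed

lemma mu_bound: "cmod \<alpha> \<le> C \<Longrightarrow> (\<And>m. cmod (\<beta> m) \<le> C) \<Longrightarrow> cmod (mu \<alpha> \<beta> u) \<le> C"
proof -
  assume a: "cmod \<alpha> \<le> C" and b: "\<And>m. cmod (\<beta> m) \<le> C"
  have "0 \<le> C" using a norm_ge_zero[of \<alpha>] by linarith
  then show ?thesis using a b by (simp add: mu_def)
qed

lemma Op_E:
  assumes g: "g \<in> Espace V Ed r q" and a: "cmod \<alpha> \<le> C" and b: "\<And>m. cmod (\<beta> m) \<le> C"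
  shows "Opx \<alpha> \<beta> g \<in> Espace V Ed r q"
proof -
  define h where "h u = mu \<alpha> \<beta> u * g u" for u
  have Oh: "Opx \<alpha> \<beta> g = h" using Op_pt[OF g] by (auto simp: h_def)
  have hl2: "h \<in> l2space V" unfolding h_def
    by (rule l2_mult[OF E_l2[OF g]]) (rule mu_bound[OF a b])
  have eq: "h u = P_root r h u + (if bc u then P_block Ed r q (par u) h u else 0)" for u
  proof (cases "u = r")
    case True then show ?thesis using bc_r by (simp add: P_root_def)
  next
    case nr: False
    show ?thesis
    proof (cases "bc u")
      case False
      then show ?thesis using nr by (simp add: P_root_def h_def mu_def)
    next
      case True
      define v where "v = par u"
      have vB: "v \<in> branching V Ed" and uv: "u \<in> Chi Ed v" using par_in[OF True] by (auto simp: v_def)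
      define c where "c = \<beta> (depth Ed r v)"
      have hin: "l2_inner h (lam Ed r q v) = c * l2_inner g (lam Ed r q v)"
      proof -
        have "(\<lambda>u'. h u' * cnj (lam Ed r q v u')) = (\<lambda>u'. c * (g u' * cnj (lam Ed r q v u')))"
        proof
          fix u'
          show "h u' * cnj (lam Ed r q v u') = c * (g u' * cnj (lam Ed r q v u'))"
          proof (cases "u' \<in> Chi Ed v")
            case True
            then have "u' \<noteq> r" using r_notchi by auto
            moreover have "bc u'" using True vB by (auto simp: bc_def)
            moreover have "par u' = v" using par_eq[OF vB True] .
            ultimately show ?thesis by (simp add: h_def mu_def c_def)
          next
            case False then show ?thesis by (simp add: lam_def)
          qed
        qed
        then show ?thesis unfolding l2_inner_def by (simp only: infsum_cmult_right')
      qed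
      have "P_block Ed r q v h u = c * P_block Ed r q v g u"
        using uv by (simp add: P_block_def hin h_def mu_def nr True v_def[symmetric] c_def algebra_simps)
      also have "\<dots> = c * g u" using E_bc[OF g True] by (simp add: v_def)
      also have "\<dots> = h u" using nr True by (simp add: h_def mu_def c_def v_def)
      finally show ?thesis using nr True by (simp add: P_root_def v_def)
    qed
  qed
  show ?thesis unfolding Oh E_char
  proof (intro conjI allI)
    show "h \<in> l2space V" by (rule hl2)
    fix u show "h u = P_root r h u + (if bc u then P_block Ed r q (par u) h u else 0)" by (rule eq)
  qed
qed

end


context TC begin

lemma branching_fin: "v \<in> branching V Ed \<Longrightarrow> finite (Chi Ed v)"
  unfolding branching_def using card.infinite by fastforce

lemma E_lin:
  assumes g: "g \<in> Espace V Ed r q" and h: "h \<in> Espace V Ed r q"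
  shows "(\<lambda>u. a * g u + b * h u) \<in> Espace V Ed r q"
proof -
  define k where "k u = a * g u + b * h u" for u
  have kl2: "k \<in> l2space V" unfolding k_def by (rule l2_lin[OF E_l2[OF g] E_l2[OF h]])
  have eq: "k u = P_root r k u + (if bc u then P_block Ed r q (par u) k u else 0)" for u
  proof (cases "u = r")
    case True then show ?thesis using bc_r by (simp add: P_root_def)
  next
    case nr: False
    show ?thesis
    proof (cases "bc u")
      case False
      then show ?thesis using nr E_nbc[OF g nr] E_nbc[OF h nr] by (simp add: P_root_def k_def)
    next
      case True
      define v where "v = par u"
      have vB: "v \<in> branching V Ed" and uv: "u \<in> Chi Ed v" using par_in[OF True] by (auto simp: v_def)
      have fin: "finite (Chi Ed v)" by (rule branching_fin[OF vB])
      have lz: "\<And>u'. u' \<notin> Chi Ed v \<Longrightarrow> lam Ed r q v u' = 0" by (simp add: lam_def)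
      have kin: "l2_inner k (lam Ed r q v) = a * l2_inner g (lam Ed r q v) + b * l2_inner h (lam Ed r q v)"
        by (simp add: l2_inner_fin[OF fin lz] k_def sum_distrib_left sum.distrib algebra_simps)
      have "P_block Ed r q v k u = a * P_block Ed r q v g u + b * P_block Ed r q v h u"
        using uv by (simp add: P_block_def kin k_def add_divide_distrib algebra_simps)
      also have "\<dots> = k u" using E_bc[OF g True] E_bc[OF h True] by (simp add: v_def k_def)
      finally show ?thesis using nr True by (simp add: P_root_def v_def)
    qed
  qed
  show ?thesis unfolding E_char k_def[symmetric]
  proof (intro conjI allI)
    show "k \<in> l2space V" by (rule kl2)
    fix u show "k u = P_root r k u + (if bc u then P_block Ed r q (par u) k u else 0)" by (rule eq)
  qed
qed

lemma Op_lin: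
  assumes g: "g \<in> Espace V Ed r q" and h: "h \<in> Espace V Ed r q"
  shows "Opx \<alpha> \<beta> (\<lambda>u. a * g u + b * h u) = (\<lambda>u. a * Opx \<alpha> \<beta> g u + b * Opx \<alpha> \<beta> h u)"
proof
  fix u
  show "Opx \<alpha> \<beta> (\<lambda>u. a * g u + b * h u) u = a * Opx \<alpha> \<beta> g u + b * Opx \<alpha> \<beta> h u"
    unfolding Op_pt[OF E_lin[OF g h]] Op_pt[OF g] Op_pt[OF h] by (simp add: algebra_simps)
qed

lemma Op_bounded:
  assumes a: "cmod \<alpha> \<le> C" and b: "\<And>m. cmod (\<beta> m) \<le> C"
  shows "bounded_op_on (Espace V Ed r q) (Opx \<alpha> \<beta>)"
  unfolding bounded_op_on_def
proof (intro conjI ballI allI impI exI)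
  fix g assume g: "g \<in> Espace V Ed r q"
  show "Opx \<alpha> \<beta> g \<in> Espace V Ed r q" by (rule Op_E[OF g a b])
  have "Opx \<alpha> \<beta> g = (\<lambda>u. mu \<alpha> \<beta> u * g u)" using Op_pt[OF g] by auto
  then show "l2_norm (Opx \<alpha> \<beta> g) \<le> C * l2_norm g"
    using l2_norm_mult[OF E_l2[OF g] mu_bound[OF a b]] by simp
next
  fix a b g h assume "g \<in> Espace V Ed r q" "h \<in> Espace V Ed r q"
  then show "Opx \<alpha> \<beta> (\<lambda>u. a * g u + b * h u) = (\<lambda>u. a * Opx \<alpha> \<beta> g u + b * Opx \<alpha> \<beta> h u)"
    by (rule Op_lin)
qed

lemma mu_mult: "mu \<alpha> \<beta> u * mu \<alpha>' \<beta>' u = mu (\<alpha> * \<alpha>') (\<lambda>m. \<beta> m * \<beta>' m) u"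
  by (simp add: mu_def)

lemma Op_comp:
  assumes g: "g \<in> Espace V Ed r q" and a: "cmod \<alpha>' \<le> C" and b: "\<And>m. cmod (\<beta>' m) \<le> C"
  shows "Opx \<alpha> \<beta> (Opx \<alpha>' \<beta>' g) = Opx (\<alpha> * \<alpha>') (\<lambda>m. \<beta> m * \<beta>' m) g"
proof
  fix u
  show "Opx \<alpha> \<beta> (Opx \<alpha>' \<beta>' g) u = Opx (\<alpha> * \<alpha>') (\<lambda>m. \<beta> m * \<beta>' m) g u"
    unfolding Op_pt[OF Op_E[OF g a b]] Op_pt[OF g] mu_mult[symmetric] by (simp add: mult.assoc)
qed

lemma Op_id: "g \<in> Espace V Ed r q \<Longrightarrow> Opx 1 (\<lambda>_. 1) g = g"
  unfolding Opx_def Espace_def by auto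

lemma Op_diff:
  assumes g: "g \<in> Espace V Ed r q"
  shows "Opx \<alpha> \<beta> g = (\<lambda>u. g u - Opx (1 - \<alpha>) (\<lambda>m. 1 - \<beta> m) g u)"
proof
  fix u
  show "Opx \<alpha> \<beta> g u = g u - Opx (1 - \<alpha>) (\<lambda>m. 1 - \<beta> m) g u"
    unfolding Op_pt[OF g] using E_nbc[OF g, of u]
    by (cases "u = r"; cases "bc u") (auto simp: mu_def algebra_simps)
qed

end


lemma infsum_finsum:
  fixes f :: "'i \<Rightarrow> 'a \<Rightarrow> complex"
  assumes "finite I" and "\<And>i. i \<in> I \<Longrightarrow> f i summable_on A"
  shows "(\<lambda>x. \<Sum>i\<in>I. f i x) summable_on A \<and> (\<Sum>i\<in>I. infsum (f i) A) = infsum (\<lambda>x. \<Sum>i\<in>I. f i x) A"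
  using assms
proof (induction I rule: finite_induct)
  case empty then show ?case by simp
next
  case (insert i I)
  then have IH: "(\<lambda>x. \<Sum>i\<in>I. f i x) summable_on A \<and> (\<Sum>i\<in>I. infsum (f i) A) = infsum (\<lambda>x. \<Sum>i\<in>I. f i x) A"
    by auto
  have fi: "f i summable_on A" using insert by auto
  show ?case using insert(1,2) IH fi
    by (simp add: summable_on_add infsum_add)
qed

lemma poch_ratio_le:
  fixes s t :: real
  assumes "0 < s" "s \<le> t"
  shows "\<bar>pochhammer s n / pochhammer t n\<bar> \<le> 1"
proof -
  have "0 < pochhammer s n" "0 < pochhammer t n" using assms by (auto intro: pochhammer_pos)
  moreover have "pochhammer s n \<le> pochhammer t n"
  proof (induction n)
    case 0 then show ?case by simp
  next
    case (Suc n)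
    have "0 \<le> pochhammer s n" using assms by (auto intro: pochhammer_pos less_imp_le)
    then show ?case unfolding pochhammer_Suc using Suc assms
      by (intro mult_mono) auto
  qed
  ultimately show ?thesis by simp
qed

lemma norm_lt1: "cmod z < 1 \<Longrightarrow> cmod w < 1 \<Longrightarrow> cmod (z * cnj w) < 1"
proof -
  assume z: "cmod z < 1" and w: "cmod w < 1"
  have "cmod (z * cnj w) = cmod z * cmod w" by (simp add: norm_mult)
  also have "\<dots> \<le> cmod z * 1" using w by (intro mult_left_mono) auto
  also have "\<dots> < 1" using z by simp
  finally show ?thesis .
qed

theorem mainTheorem9:
  fixes V :: "'v set" and Ed :: "('v \<times> 'v) set" and r :: 'v and q :: real
  assumes "rooted_directed_tree V Ed r"
    and "locally_finite_tree V Ed"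
    and "leafless_tree V Ed"
    and "countable V" and "infinite V"
    and "q \<ge> 1"
  shows "(\<forall>z\<in>ball 0 1. \<forall>w\<in>ball 0 1.
            bounded_op_on (Espace V Ed r q) (dirichlet_kernel V Ed r q z w) \<and>
            (\<exists>G. invertible_op_on (Espace V Ed r q) (dirichlet_kernel V Ed r q z w) G)) \<and>
         (\<exists>F. positive_definite_on (Espace V Ed r q) F \<and>
            (\<forall>z\<in>ball 0 1. \<forall>w\<in>ball 0 1.
               bounded_op_on (Espace V Ed r q) (F z w) \<and>
               (\<forall>G. invertible_op_on (Espace V Ed r q) (dirichlet_kernel V Ed r q z w) G \<longrightarrow>
                  (\<forall>g\<in>Espace V Ed r q. F z w g = (\<lambda>u. g u - G g u)))))"
proof -
  have rt: "Ed \<subseteq> V \<times> V" "\<And>u. (u, r) \<notin> Ed" "\<And>v. v \<in> V \<Longrightarrow> v \<noteq> r \<Longrightarrow> \<exists>!u. (u, v) \<in> Ed"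
    using assms(1) unfolding rooted_directed_tree_def by auto
  interpret TC V Ed r q by (rule TC.intro[OF rt])
  define E where "E = Espace V Ed r q"
  have q1: "1 \<le> q" by (rule assms(6))
  define PK where "PK s t c \<longleftrightarrow> (\<forall>n. 0 \<le> c n \<and> c n \<le> 1) \<and>
     (\<forall>x::complex. cmod x < 1 \<longrightarrow>
        (\<Sum>n. complex_of_real (pochhammer s n / pochhammer t n) * x ^ n) *
          (1 - Cf c x) = 1)" for s t :: real and c :: "nat \<Rightarrow> real"
  have PKex: "0 < s \<Longrightarrow> s \<le> t \<Longrightarrow> \<exists>c. PK s t c" for s t
    using kal_pkg[of s t] unfolding PK_def Cf_def by blast
  define cR where "cR = (SOME c. PK 1 q c)"
  define cV where "cV m = (SOME c. PK (real m + 2) (real m + q + 1) c)" for m :: nat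
  have PR: "PK 1 q cR"
  proof -
    have "\<exists>c. PK 1 q c" by (rule PKex) (use q1 in auto)
    then show ?thesis unfolding cR_def by (rule someI_ex)
  qed
  have PV: "PK (real m + 2) (real m + q + 1) (cV m)" for m
  proof -
    have "\<exists>c. PK (real m + 2) (real m + q + 1) c" by (rule PKex) (use q1 in auto)
    then show ?thesis unfolding cV_def by (rule someI_ex)
  qed
  have cRb: "0 \<le> cR n \<and> cR n \<le> 1" for n using PR by (simp add: PK_def)
  have cVb: "0 \<le> cV m n \<and> cV m n \<le> 1" for m n using PV by (simp add: PK_def)
  have kR: "cmod x < 1 \<Longrightarrow> k_root q x * (1 - Cf cR x) = 1" for x
    using PR unfolding PK_def k_root_def by simp
  have kV: "cmod x < 1 \<Longrightarrow> k_vert q m x * (1 - Cf (cV m) x) = 1" for x m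
    using PV[of m] unfolding PK_def k_vert_def by simp
  define Bd where "Bd x = 1 + 1 / (1 - cmod x)" for x :: complex
  have CfB: "cmod x < 1 \<Longrightarrow> (\<And>n. 0 \<le> c n \<and> c n \<le> 1) \<Longrightarrow> cmod (Cf c x) \<le> 1 / (1 - cmod x)" for c x
    unfolding Cf_def by (rule geom_bound(2)) (auto simp: abs_le_iff)
  have B1: "cmod x < 1 \<Longrightarrow> 0 \<le> 1 / (1 - cmod x)" for x :: complex by simp
  have bCR: "cmod x < 1 \<Longrightarrow> cmod (Cf cR x) \<le> Bd x" for x
    using CfB[of x cR] cRb unfolding Bd_def by fastforce
  have bCV: "cmod x < 1 \<Longrightarrow> cmod (Cf (cV m) x) \<le> Bd x" for x m
    using CfB[of x "cV m"] cVb unfolding Bd_def by fastforce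
  have b1CR: "cmod x < 1 \<Longrightarrow> cmod (1 - Cf cR x) \<le> Bd x" for x
    using CfB[of x cR] cRb norm_triangle_ineq4[of 1 "Cf cR x"] unfolding Bd_def by fastforce
  have b1CV: "cmod x < 1 \<Longrightarrow> cmod (1 - Cf (cV m) x) \<le> Bd x" for x m
    using CfB[of x "cV m"] cVb norm_triangle_ineq4[of 1 "Cf (cV m) x"] unfolding Bd_def by fastforce
  have bkR: "cmod x < 1 \<Longrightarrow> cmod (k_root q x) \<le> Bd x" for x
  proof -
    assume x: "cmod x < 1"
    have "cmod (k_root q x) \<le> 1 / (1 - cmod x)" unfolding k_root_def
      by (rule geom_bound(2)[OF _ x]) (rule poch_ratio_le, use q1 in auto)
    then show ?thesis unfolding Bd_def by simp
  qed
  have bkV: "cmod x < 1 \<Longrightarrow> cmod (k_vert q m x) \<le> Bd x" for x m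
  proof -
    assume x: "cmod x < 1"
    have "cmod (k_vert q m x) \<le> 1 / (1 - cmod x)" unfolding k_vert_def
      by (rule geom_bound(2)[OF _ x]) (rule poch_ratio_le, use q1 in auto)
    then show ?thesis unfolding Bd_def by simp
  qed
  have DK: "dirichlet_kernel V Ed r q z w = Opx (k_root q (z * cnj w)) (\<lambda>m. k_vert q m (z * cnj w))" for z w
    unfolding dirichlet_kernel_def Opx_def by (rule ext) (rule refl)
  define G0 where "G0 z w = Opx (1 - Cf cR (z * cnj w)) (\<lambda>m. 1 - Cf (cV m) (z * cnj w))" for z w
  define F where "F z w = Opx (Cf cR (z * cnj w)) (\<lambda>m. Cf (cV m) (z * cnj w))" for z w
  have inv: "invertible_op_on E (dirichlet_kernel V Ed r q z w) (G0 z w)"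
    and KG: "\<And>g. g \<in> E \<Longrightarrow> dirichlet_kernel V Ed r q z w (G0 z w g) = g"
    and G0E: "\<And>g. g \<in> E \<Longrightarrow> G0 z w g \<in> E"
    and Kb: "bounded_op_on E (dirichlet_kernel V Ed r q z w)"
    if z: "z \<in> ball 0 1" and w: "w \<in> ball 0 1" for z w
  proof -
    define x where "x = z * cnj w"
    have x: "cmod x < 1" using z w unfolding x_def by (intro norm_lt1) auto
    have e1: "(\<lambda>m. k_vert q m x * (1 - Cf (cV m) x)) = (\<lambda>_. 1)" using kV[OF x] by auto
    have e2: "(\<lambda>m. (1 - Cf (cV m) x) * k_vert q m x) = (\<lambda>_. 1)" using kV[OF x] by (auto simp: mult.commute)
    have e3: "(1 - Cf cR x) * k_root q x = 1" using kR[OF x] by (simp add: mult.commute)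
    show KG: "\<And>g. g \<in> E \<Longrightarrow> dirichlet_kernel V Ed r q z w (G0 z w g) = g"
      unfolding DK G0_def x_def[symmetric] E_def
      by (subst Op_comp[where C="Bd x"]) (auto simp: b1CR[OF x] b1CV[OF x] kR[OF x] e1 Op_id)
    show G0E: "\<And>g. g \<in> E \<Longrightarrow> G0 z w g \<in> E"
      unfolding G0_def x_def[symmetric] E_def
      by (rule Op_E[where C="Bd x"]) (auto simp: b1CR[OF x] b1CV[OF x])
    show Kb: "bounded_op_on E (dirichlet_kernel V Ed r q z w)"
      unfolding DK x_def[symmetric] E_def
      by (rule Op_bounded[where C="Bd x"]) (auto simp: bkR[OF x] bkV[OF x])
    have Gb: "bounded_op_on E (G0 z w)"
      unfolding G0_def x_def[symmetric] E_def
      by (rule Op_bounded[where C="Bd x"]) (auto simp: b1CR[OF x] b1CV[OF x])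
    have GK: "\<And>g. g \<in> E \<Longrightarrow> G0 z w (dirichlet_kernel V Ed r q z w g) = g"
      unfolding DK G0_def x_def[symmetric] E_def
      by (subst Op_comp[where C="Bd x"]) (auto simp: bkR[OF x] bkV[OF x] e3 e2 Op_id)
    show "invertible_op_on E (dirichlet_kernel V Ed r q z w) (G0 z w)"
      unfolding invertible_op_on_def using Gb GK KG by auto
  qed
  have pd: "positive_definite_on E F"
    unfolding positive_definite_on_def Let_def
  proof (intro allI impI)
    fix m :: nat and z :: "nat \<Rightarrow> complex" and g :: "nat \<Rightarrow> 'v \<Rightarrow> complex"
    assume a: "\<forall>i<m. z i \<in> ball 0 1 \<and> g i \<in> E"
    have zb: "\<And>i. i < m \<Longrightarrow> cmod (z i) < 1" using a by auto
    have gE: "\<And>i. i < m \<Longrightarrow> g i \<in> Espace V Ed r q" using a by (auto simp: E_def)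
    define cu where "cu u = (if u = r then cR else if bc u then cV (depth Ed r (par u)) else (\<lambda>_. 0))" for u
    have cub: "0 \<le> cu u n \<and> cu u n \<le> 1" for u n using cRb cVb by (simp add: cu_def)
    have muC: "mu (Cf cR x) (\<lambda>k. Cf (cV k) x) u = Cf (cu u) x" for x u
      by (simp add: mu_def cu_def Cf_def)
    define T where "T i j u = Cf (cu u) (z i * cnj (z j)) * g j u * cnj (g i u)" for i j u
    have Fpt: "F (z i) (z j) (g j) = (\<lambda>u. Cf (cu u) (z i * cnj (z j)) * g j u)" if "j < m" for i j
      unfolding F_def using Op_pt[OF gE[OF that]] muC by auto
    have inner: "l2_inner (F (z i) (z j) (g j)) (g i) = infsum (T i j) UNIV" if "j < m" for i j
      unfolding l2_inner_def Fpt[OF that] T_def by simp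
    have summ: "T i j summable_on UNIV" if i: "i < m" and j: "j < m" for i j
    proof -
      define x where "x = z i * cnj (z j)"
      have x: "cmod x < 1" unfolding x_def by (rule norm_lt1[OF zb[OF i] zb[OF j]])
      have FE: "F (z i) (z j) (g j) \<in> Espace V Ed r q"
        unfolding F_def x_def[symmetric]
        by (rule Op_E[OF gE[OF j], where C="Bd x"]) (auto simp: bCR[OF x] bCV[OF x])
      have "(\<lambda>u. F (z i) (z j) (g j) u * cnj (g i u)) summable_on UNIV"
        by (rule l2_prod[OF E_l2[OF FE] E_l2[OF gE[OF i]]])
      then show ?thesis unfolding Fpt[OF j] T_def .
    qed
    define S where "S u = (\<Sum>i<m. \<Sum>j<m. T i j u)" for u
    have step1: "(\<lambda>u. \<Sum>j<m. T i j u) summable_on UNIV \<and>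
        (\<Sum>j<m. infsum (T i j) UNIV) = infsum (\<lambda>u. \<Sum>j<m. T i j u) UNIV" if "i < m" for i
      by (rule infsum_finsum) (use summ that in auto)
    have step2: "S summable_on UNIV \<and>
        (\<Sum>i<m. infsum (\<lambda>u. \<Sum>j<m. T i j u) UNIV) = infsum S UNIV"
      unfolding S_def by (rule infsum_finsum) (use step1 in auto)
    have seq: "(\<Sum>i<m. \<Sum>j<m. l2_inner (F (z i) (z j) (g j)) (g i)) = infsum S UNIV"
    proof -
      have "(\<Sum>i<m. \<Sum>j<m. l2_inner (F (z i) (z j) (g j)) (g i)) = (\<Sum>i<m. \<Sum>j<m. infsum (T i j) UNIV)"
        by (intro sum.cong refl) (simp add: inner)
      also have "\<dots> = (\<Sum>i<m. infsum (\<lambda>u. \<Sum>j<m. T i j u) UNIV)"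
        by (intro sum.cong refl) (use step1 in auto)
      also have "\<dots> = infsum S UNIV" using step2 by simp
      finally show ?thesis .
    qed
    have Sreal: "S u = complex_of_real (Re (S u)) \<and> 0 \<le> Re (S u)" for u
    proof -
      obtain R where R: "R \<ge> 0" "(\<Sum>i<m. \<Sum>j<m. Cf (cu u) (z i * cnj (z j)) * g j u * cnj (g i u)) = complex_of_real R"
        using pos_pt[where c="cu u" and z=z and G="\<lambda>j. g j u" and m=m] cub zb by blast
      then have "S u = complex_of_real R" unfolding S_def T_def by simp
      then show ?thesis using R by simp
    qed
    have Ssum: "S summable_on UNIV" using step2 by simp
    have "Im (infsum S UNIV) = infsum (\<lambda>u. Im (S u)) UNIV" by (rule infsum_Im[OF Ssum, symmetric])
    also have "\<dots> = 0" by (rule infsum_0) (metis Sreal Im_complex_of_real)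
    finally have im: "Im (infsum S UNIV) = 0" .
    have "Re (infsum S UNIV) = infsum (\<lambda>u. Re (S u)) UNIV" by (rule infsum_Re[OF Ssum, symmetric])
    also have "\<dots> \<ge> 0" by (rule infsum_nonneg) (use Sreal in auto)
    finally have re: "0 \<le> Re (infsum S UNIV)" .
    show "Im (\<Sum>i<m. \<Sum>j<m. l2_inner (F (z i) (z j) (g j)) (g i)) = 0 \<and>
          0 \<le> Re (\<Sum>i<m. \<Sum>j<m. l2_inner (F (z i) (z j) (g j)) (g i))"
      unfolding seq using im re by simp
  qed
  show ?thesis
    unfolding E_def[symmetric]
  proof (intro conjI ballI exI[of _ F] allI impI)
    fix z w :: complex assume z: "z \<in> ball 0 1" and w: "w \<in> ball 0 1"
    show "bounded_op_on E (dirichlet_kernel V Ed r q z w)" by (rule Kb[OF z w])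
    show "\<exists>G. invertible_op_on E (dirichlet_kernel V Ed r q z w) G" using inv[OF z w] by blast
  next
    show "positive_definite_on E F" by (rule pd)
  next
    fix z w :: complex assume z: "z \<in> ball 0 1" and w: "w \<in> ball 0 1"
    define x where "x = z * cnj w"
    have x: "cmod x < 1" using z w unfolding x_def by (intro norm_lt1) auto
    show "bounded_op_on E (F z w)"
      unfolding F_def x_def[symmetric] E_def
      by (rule Op_bounded[where C="Bd x"]) (auto simp: bCR[OF x] bCV[OF x])
    fix G g assume G: "invertible_op_on E (dirichlet_kernel V Ed r q z w) G" and g: "g \<in> E"
    have "G g = G (dirichlet_kernel V Ed r q z w (G0 z w g))" using KG[OF z w g] by simp
    also have "\<dots> = G0 z w g" using G G0E[OF z w g] by (simp add: invertible_op_on_def)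
    finally have Gg: "G g = G0 z w g" .
    show "F z w g = (\<lambda>u. g u - G g u)"
      unfolding Gg F_def G0_def using g unfolding E_def by (rule Op_diff)
  qed
qed


end
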